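(* Let $p\in[1,\infty]$. (i) If $\mathcal A\subsetneq\mathcal B$ are $\sigma$-subfields, then $\|\mathbb P_{\mathcal B}-\mathbb P_{\mathcal A}\|_{L^p\to L^p}\ge1$. (ii) If $\mathcal A,\mathcal B$ are $\sigma$-subfields and there is $A\in\mathcal A$ with $\mathbb P(A)\in(0,1)$ that is independent of $\mathcal B$, then $\|\mathbb P_{\mathcal A}-\mathbb P_{\mathcal B}\|_{L^p\to L^p}\ge1$. Consequently, for $\sigma$-subfields $(\mathcal B_n)_{n\in\mathbb N_0}$, $\|\mathbb P_{\mathcal B_n}-\mathbb P_{\mathcal B_0}\|_{L^p\to L^p}\not\to0$ whenever either for infinitely many $n$ one has $\mathcal B_n\subsetneq\mathcal B_0$ or $\mathcal B_0\subsetneq\mathcal B_n$, or for infinitely many $n$ one of $\mathcal B_n,\mathcal B_0$ contains an event of probability in $(0,1)$ independent of the other. In particular, a monotone (increasing or decreasing) sequence of $\sigma$-subfields that is not ultimately constant never converges to its limit $\bigvee_n\mathcal B_n$ (resp. $\bigcap_n\mathcal B_n$) in the $L^p\to L^p$ operator norm.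
   Context: Let $(\Omega,\mathcal F,\mathbb P)$ be a (not necessarily complete) probability space and $\mathcal N:=\{F\in\mathcal F:\mathbb P(F)=0\}$. A $\sigma$-subfield is a sub-$\sigma$-field $\mathcal A\subset\mathcal F$ with $\mathcal A=\sigma(\mathcal A\cup\mathcal N)$. For a $\sigma$-subfield $\mathcal A$, $\mathbb P_{\mathcal A}f:=\mathbb E^{\mathbb P}[f\mid\mathcal A]$, viewed as a bounded linear operator on the real normed space $L^p(\mathbb P)$; $\|\cdot\|_{L^p\to L^p}$ is the operator norm. *)

theory Defs
  imports "HOL-Probability.Probability"
begin

definition sigma_subfield :: "'a measure \<Rightarrow> 'a measure \<Rightarrow> bool" where
  "sigma_subfield M F \<longleftrightarrow> subalgebra M F \<and>
     sets F = sigma_sets (space M) (sets F \<union> null_sets M)"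

definition Lp_norm :: "'a measure \<Rightarrow> ennreal \<Rightarrow> ('a \<Rightarrow> real) \<Rightarrow> ennreal" where
  "Lp_norm M p f =
     (if p = \<infinity> then esssup M (\<lambda>x. ennreal \<bar>f x\<bar>)
      else (let I = (\<integral>\<^sup>+ x. ennreal (\<bar>f x\<bar> powr enn2real p) \<partial>M)
            in if I = \<infinity> then \<infinity> else ennreal (enn2real I powr (1 / enn2real p))))"

definition memLp :: "'a measure \<Rightarrow> ennreal \<Rightarrow> ('a \<Rightarrow> real) \<Rightarrow> bool" where
  "memLp M p f \<longleftrightarrow> f \<in> borel_measurable M \<and> Lp_norm M p f < \<infinity>"

definition Lp_opnorm :: "'a measure \<Rightarrow> ennreal \<Rightarrow> (('a \<Rightarrow> real) \<Rightarrow> ('a \<Rightarrow> real)) \<Rightarrow> ennreal" where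
  "Lp_opnorm M p T = (SUP f \<in> {f. memLp M p f \<and> Lp_norm M p f \<le> 1}. Lp_norm M p (T f))"

definition cexp_diff_norm :: "'a measure \<Rightarrow> ennreal \<Rightarrow> 'a measure \<Rightarrow> 'a measure \<Rightarrow> ennreal" where
  "cexp_diff_norm M p B A =
     Lp_opnorm M p (\<lambda>f x. real_cond_exp M B f x - real_cond_exp M A f x)"

definition indep_of :: "'a measure \<Rightarrow> 'a set \<Rightarrow> 'a measure \<Rightarrow> bool" where
  "indep_of M E B \<longleftrightarrow> prob_space.indep_set M {E} (sets B)"

definition nontriv_indep_event :: "'a measure \<Rightarrow> 'a measure \<Rightarrow> 'a measure \<Rightarrow> bool" where
  "nontriv_indep_event M A B \<longleftrightarrow>
     (\<exists>E\<in>sets A. 0 < measure M E \<and> measure M E < 1 \<and> indep_of M E B)"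

end

theory Submission
  imports Defs
begin

lemma Lp_norm_cong_AE:
  assumes "f \<in> borel_measurable M" "g \<in> borel_measurable M" "AE x in M. f x = g x"
  shows "Lp_norm M p f = Lp_norm M p g"
proof -
  have e: "esssup M (\<lambda>x. ennreal \<bar>f x\<bar>) = esssup M (\<lambda>x. ennreal \<bar>g x\<bar>)"
    by (rule esssup_AE_cong) (use assms in auto)
  have i: "(\<integral>\<^sup>+ x. ennreal (\<bar>f x\<bar> powr enn2real p) \<partial>M) = (\<integral>\<^sup>+ x. ennreal (\<bar>g x\<bar> powr enn2real p) \<partial>M)"
    by (rule nn_integral_cong_AE) (use assms(3) in auto)
  show ?thesis unfolding Lp_norm_def e i by simp
qed

lemma esssup_cmult_le:
  fixes h :: "'a \<Rightarrow> ennreal"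
  assumes "h \<in> borel_measurable M"
  shows "esssup M (\<lambda>x. c * h x) \<le> c * esssup M h"
proof (rule esssup_I)
  show "(\<lambda>x. c * h x) \<in> borel_measurable M" using assms by measurable
  show "AE x in M. c * h x \<le> c * esssup M h"
    using esssup_AE[of h M] by (auto elim!: eventually_mono intro: mult_left_mono)
qed

lemma esssup_cmult_ennreal:
  fixes h :: "'a \<Rightarrow> ennreal"
  assumes "h \<in> borel_measurable M" "c > 0"
  shows "esssup M (\<lambda>x. ennreal c * h x) = ennreal c * esssup M h"
proof (rule antisym)
  show "esssup M (\<lambda>x. ennreal c * h x) \<le> ennreal c * esssup M h" by (rule esssup_cmult_le[OF assms(1)])
  have m: "(\<lambda>x. ennreal c * h x) \<in> borel_measurable M" using assms by measurable
  have eq: "(\<lambda>x. ennreal (1/c) * (ennreal c * h x)) = h"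
    using assms(2) by (auto simp: ennreal_mult'[symmetric] mult.assoc[symmetric] simp del: ennreal_mult' ennreal_mult)
  have "esssup M h \<le> ennreal (1/c) * esssup M (\<lambda>x. ennreal c * h x)"
    using esssup_cmult_le[OF m, of "ennreal (1/c)"] unfolding eq .
  then have "ennreal c * esssup M h \<le> ennreal c * (ennreal (1/c) * esssup M (\<lambda>x. ennreal c * h x))"
    by (rule mult_left_mono) simp
  also have "\<dots> = esssup M (\<lambda>x. ennreal c * h x)"
    using assms(2) by (simp add: mult.assoc[symmetric] ennreal_mult'[symmetric] del: ennreal_mult' ennreal_mult)
  finally show "ennreal c * esssup M h \<le> esssup M (\<lambda>x. ennreal c * h x)" .
qed

lemma Lp_norm_cmult:
  assumes "f \<in> borel_measurable M" "c > 0" "1 \<le> p"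
  shows "Lp_norm M p (\<lambda>x. c * f x) = ennreal c * Lp_norm M p f"
proof (cases "p = \<infinity>")
  case True
  have "esssup M (\<lambda>x. ennreal \<bar>c * f x\<bar>) = esssup M (\<lambda>x. ennreal c * ennreal \<bar>f x\<bar>)"
    using assms(2) by (simp add: abs_mult ennreal_mult)
  also have "\<dots> = ennreal c * esssup M (\<lambda>x. ennreal \<bar>f x\<bar>)"
    by (rule esssup_cmult_ennreal) (use assms in auto)
  finally show ?thesis using True by (simp add: Lp_norm_def)
next
  case False
  define q where "q = enn2real p"
  have q: "q \<ge> 1" using assms(3) False unfolding q_def
    by (cases p rule: ennreal_cases) (auto simp: ennreal_ge_1)
  define I where "I = (\<integral>\<^sup>+ x. ennreal (\<bar>f x\<bar> powr q) \<partial>M)"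
  have "(\<integral>\<^sup>+ x. ennreal (\<bar>c * f x\<bar> powr q) \<partial>M) = (\<integral>\<^sup>+ x. ennreal (c powr q) * ennreal (\<bar>f x\<bar> powr q) \<partial>M)"
    using assms(2) by (simp add: abs_mult powr_mult ennreal_mult)
  also have "\<dots> = ennreal (c powr q) * I"
    unfolding I_def by (rule nn_integral_cmult) (use assms in measurable)
  finally have eq: "(\<integral>\<^sup>+ x. ennreal (\<bar>c * f x\<bar> powr q) \<partial>M) = ennreal (c powr q) * I" .
  show ?thesis
  proof (cases "I = \<infinity>")
    case True
    then show ?thesis using False eq assms(2) unfolding Lp_norm_def q_def[symmetric] I_def[symmetric]
      by (simp add: ennreal_mult_top)
  next
    case fin: False
    have cq: "c powr q > 0" using assms(2) by simp
    have "ennreal (c powr q) * I \<noteq> \<infinity>" using fin by (simp add: ennreal_mult_eq_top_iff)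
    moreover have "enn2real (ennreal (c powr q) * I) powr (1/q) = c * enn2real I powr (1/q)"
      using cq q assms(2) by (simp add: enn2real_mult powr_mult powr_powr)
    ultimately show ?thesis using False fin eq assms(2) unfolding Lp_norm_def q_def[symmetric] I_def[symmetric]
      by (simp add: ennreal_mult)
  qed
qed

lemma Lp_norm_pos_fin:
  assumes "prob_space M" "1 \<le> p" "g \<in> borel_measurable M" "AE x in M. \<bar>g x\<bar> \<le> C"
    "\<not> (AE x in M. g x = 0)"
  shows "0 < Lp_norm M p g" "Lp_norm M p g < \<infinity>"
proof -
  interpret prob_space M by fact
  have C: "0 \<le> C"
  proof (rule ccontr)
    assume "\<not> 0 \<le> C"
    then have "AE x in M. False" using assms(4) by (rule_tac eventually_mono[OF assms(4)]) auto
    then show False by (simp add: AE_False)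
  qed
  have "0 < Lp_norm M p g \<and> Lp_norm M p g < \<infinity>"
  proof (cases "p = \<infinity>")
    case True
    have le: "esssup M (\<lambda>x. ennreal \<bar>g x\<bar>) \<le> ennreal C"
      by (rule esssup_I) (use assms(3,4) in \<open>auto elim!: eventually_mono\<close>)
    have pos: "esssup M (\<lambda>x. ennreal \<bar>g x\<bar>) \<noteq> 0"
    proof
      assume "esssup M (\<lambda>x. ennreal \<bar>g x\<bar>) = 0"
      then have "AE x in M. ennreal \<bar>g x\<bar> \<le> 0" using esssup_AE[of "\<lambda>x. ennreal \<bar>g x\<bar>" M] by simp
      then have "AE x in M. g x = 0" by (auto elim!: eventually_mono)
      then show False using assms(5) by simp
    qed
    have "esssup M (\<lambda>x. ennreal \<bar>g x\<bar>) < \<infinity>"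
      using le_less_trans[OF le ennreal_less_top] by simp
    then show ?thesis using True pos by (auto simp: Lp_norm_def zero_less_iff_neq_zero)
  next
    case False
    define q where "q = enn2real p"
    have q: "q \<ge> 1" using assms(2) False unfolding q_def
      by (cases p rule: ennreal_cases) (auto simp: ennreal_ge_1)
    define I where "I = (\<integral>\<^sup>+ x. ennreal (\<bar>g x\<bar> powr q) \<partial>M)"
    have "I \<le> (\<integral>\<^sup>+ x. ennreal (C powr q) \<partial>M)"
      unfolding I_def
      by (rule nn_integral_mono_AE) (use assms(4) q in \<open>auto elim!: eventually_mono intro!: powr_mono2\<close>)
    also have "\<dots> = ennreal (C powr q)" by (simp add: emeasure_space_1)
    finally have Ifin: "I \<noteq> \<infinity>" by (auto simp: top_unique)
    have I0: "I \<noteq> 0"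
    proof
      assume "I = 0"
      then have "AE x in M. ennreal (\<bar>g x\<bar> powr q) = 0" unfolding I_def
        by (subst (asm) nn_integral_0_iff_AE) (use assms(3) in auto)
      then have "AE x in M. g x = 0" by (auto elim!: eventually_mono)
      then show False using assms(5) by simp
    qed
    have "enn2real I > 0" using Ifin I0 by (simp add: enn2real_positive_iff less_top zero_less_iff_neq_zero) 
    then show ?thesis using False Ifin unfolding Lp_norm_def q_def[symmetric] I_def[symmetric] by simp
  qed
  then show "0 < Lp_norm M p g" "Lp_norm M p g < \<infinity>" by auto
qed

lemma key_lower_bound:
  assumes "prob_space M" "1 \<le> p" "g \<in> borel_measurable M" "AE x in M. \<bar>g x\<bar> \<le> C"
    "\<not> (AE x in M. g x = 0)"
    "\<And>c. AE x in M. T (\<lambda>x. c * g x) x = c * g x"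
    "\<And>c. T (\<lambda>x. c * g x) \<in> borel_measurable M"
  shows "Lp_opnorm M p T \<ge> 1"
proof -
  note N = Lp_norm_pos_fin[OF assms(1-5)]
  define c where "c = 1 / enn2real (Lp_norm M p g)"
  have Nr: "enn2real (Lp_norm M p g) > 0" using N by (simp add: enn2real_positive_iff)
  have c: "c > 0" using Nr by (simp add: c_def)
  define h where "h = (\<lambda>x. c * g x)"
  have hm: "h \<in> borel_measurable M" unfolding h_def using assms(3) by measurable
  have "Lp_norm M p h = ennreal c * Lp_norm M p g"
    unfolding h_def by (rule Lp_norm_cmult) (use assms c in auto)
  also have "\<dots> = ennreal c * ennreal (enn2real (Lp_norm M p g))"
    using N by (simp add: less_top)
  also have "\<dots> = ennreal (c * enn2real (Lp_norm M p g))"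
    using c by (simp add: ennreal_mult)
  also have "\<dots> = 1" using Nr unfolding c_def by simp
  finally have h1: "Lp_norm M p h = 1" .
  have hmem: "h \<in> {f. memLp M p f \<and> Lp_norm M p f \<le> 1}"
    using h1 hm by (simp add: memLp_def)
  have "Lp_norm M p (T h) = Lp_norm M p h"
    by (rule Lp_norm_cong_AE) (use assms(6,7) hm in \<open>auto simp: h_def\<close>)
  then have "Lp_norm M p (T h) = 1" using h1 by simp
  then show ?thesis unfolding Lp_opnorm_def using SUP_upper[OF hmem, of "\<lambda>f. Lp_norm M p (T f)"] by simp
qed

lemma cexp_diff_norm_sym: "cexp_diff_norm M p A B = cexp_diff_norm M p B A"
  unfolding cexp_diff_norm_def Lp_opnorm_def Lp_norm_def by (simp add: abs_minus_commute)

lemma sfs_intro: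
  assumes "prob_space M" "sigma_subfield M F"
  shows "sigma_finite_subalgebra M F"
proof -
  interpret prob_space M by fact
  have "finite_measure_subalgebra M F"
    by unfold_locales (use assms(2) in \<open>auto simp: sigma_subfield_def\<close>)
  then show ?thesis by (rule finite_measure_subalgebra_is_sigma_finite)
qed

lemma sigma_subfield_null:
  assumes "sigma_subfield M F" shows "null_sets M \<subseteq> sets F"
proof -
  have "null_sets M \<subseteq> sigma_sets (space M) (sets F \<union> null_sets M)" by (auto intro: sigma_sets.Basic)
  then show ?thesis using assms by (simp add: sigma_subfield_def)
qed

lemma part1:
  assumes "prob_space M" "1 \<le> p" "sigma_subfield M A" "sigma_subfield M B" "sets A \<subset> sets B"
  shows "cexp_diff_norm M p B A \<ge> 1"
proof -
  interpret prob_space M by fact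
  interpret A: sigma_finite_subalgebra M A by (rule sfs_intro) fact+
  interpret B: sigma_finite_subalgebra M B by (rule sfs_intro) fact+
  obtain E where E: "E \<in> sets B" "E \<notin> sets A" using assms(5) by auto
  have EM: "E \<in> sets M" using E(1) B.subalg by (auto simp: subalgebra_def)
  have spA: "space A = space M" and spB: "space B = space M" using A.subalg B.subalg by (auto simp: subalgebra_def)
  have subBA: "subalgebra B A" using assms(5) spA spB by (auto simp: subalgebra_def)
  define u :: "'a \<Rightarrow> real" where "u = indicator E"
  define h where "h = real_cond_exp M A u"
  define g where "g = (\<lambda>x. u x - h x)"
  have uM [measurable]: "u \<in> borel_measurable M" unfolding u_def using EM by simp
  have uB: "u \<in> borel_measurable B" unfolding u_def using E(1) by simp
  have uint: "integrable M u" unfolding u_def using EM by (simp add: less_top[symmetric])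
  have hA: "h \<in> borel_measurable A" unfolding h_def by simp
  have hM [measurable]: "h \<in> borel_measurable M" unfolding h_def by simp
  have hB: "h \<in> borel_measurable B" using measurable_from_subalg[OF subBA hA] .
  have hint: "integrable M h" unfolding h_def by (rule A.real_cond_exp_int(1)[OF uint])
  have gM [measurable]: "g \<in> borel_measurable M" unfolding g_def by simp
  have gB: "g \<in> borel_measurable B" unfolding g_def using uB hB by simp
  have gint: "integrable M g" unfolding g_def using uint hint by simp
  have h0: "AE x in M. 0 \<le> h x" unfolding h_def
    by (rule A.real_cond_exp_ge_c[OF uint]) (auto simp: u_def)
  have h1: "AE x in M. h x \<le> 1" unfolding h_def
    by (rule A.real_cond_exp_le_c[OF uint]) (auto simp: u_def)
  have gbd: "AE x in M. \<bar>g x\<bar> \<le> 1"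
    using h0 h1 by eventually_elim (auto simp: g_def u_def indicator_def)
  have gnz: "\<not> (AE x in M. g x = 0)"
  proof
    assume ae: "AE x in M. g x = 0"
    define E' where "E' = {x \<in> space M. h x = 1}"
    have "{x \<in> space A. h x = 1} \<in> sets A" using hA by measurable
    then have E'A: "E' \<in> sets A" unfolding E'_def using spA by simp
    have "AE x in M. (x \<in> E \<longleftrightarrow> x \<in> E')"
      using ae AE_space by eventually_elim (auto simp: g_def u_def E'_def indicator_def split: if_splits)
    then obtain N where N: "\<And>x. x \<in> space M - N \<Longrightarrow> (x \<in> E \<longleftrightarrow> x \<in> E')" "N \<in> null_sets M"
      by (elim AE_E3) blast
    have ES: "E \<subseteq> space M" using EM sets.sets_into_space by auto
    have E'S: "E' \<subseteq> space M" unfolding E'_def by auto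
    have "E = (E' - N) \<union> (E \<inter> N)" using N(1) ES E'S by blast
    moreover have "N \<in> sets A" using N(2) sigma_subfield_null[OF assms(3)] by auto
    moreover have "E \<inter> N \<in> sets A"
      using null_set_Int2[OF N(2) EM] sigma_subfield_null[OF assms(3)] by (auto simp: Int_commute)
    ultimately have "E \<in> sets A" using E'A by (metis sets.Diff sets.Un)
    then show False using E(2) by simp
  qed
  show ?thesis unfolding cexp_diff_norm_def
  proof (rule key_lower_bound[OF assms(1,2) gM gbd gnz])
    fix c :: real
    have cgint: "integrable M (\<lambda>x. c * g x)" using gint by simp
    have 1: "AE x in M. real_cond_exp M B (\<lambda>x. c * g x) x = c * g x"
      by (rule B.real_cond_exp_F_meas[OF cgint]) (use gB in simp)
    have 2: "AE x in M. real_cond_exp M A (\<lambda>x. c * g x) x = c * real_cond_exp M A g x"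
      by (rule A.real_cond_exp_cmult[OF gint])
    have 3: "AE x in M. real_cond_exp M A g x = real_cond_exp M A u x - real_cond_exp M A h x"
      unfolding g_def by (rule A.real_cond_exp_diff[OF uint hint])
    have 4: "AE x in M. real_cond_exp M A h x = h x"
      by (rule A.real_cond_exp_F_meas[OF hint hA])
    show "AE x in M. real_cond_exp M B (\<lambda>x. c * g x) x - real_cond_exp M A (\<lambda>x. c * g x) x = c * g x"
      using 1 2 3 4 by eventually_elim (simp add: h_def)
    show "(\<lambda>x. real_cond_exp M B (\<lambda>x. c * g x) x - real_cond_exp M A (\<lambda>x. c * g x) x) \<in> borel_measurable M"
      by simp
  qed
qed

lemma part2:
  assumes "prob_space M" "1 \<le> p" "sigma_subfield M A" "sigma_subfield M B" "nontriv_indep_event M A B"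
  shows "cexp_diff_norm M p A B \<ge> 1"
proof -
  interpret prob_space M by fact
  interpret A: sigma_finite_subalgebra M A by (rule sfs_intro) fact+
  interpret B: sigma_finite_subalgebra M B by (rule sfs_intro) fact+
  obtain E where E: "E \<in> sets A" "0 < prob E" "prob E < 1" "indep_set {E} (sets B)"
    using assms(5) by (auto simp: nontriv_indep_event_def indep_of_def)
  define a where "a = prob E"
  have EM: "E \<in> sets M" using E(1) A.subalg by (auto simp: subalgebra_def)
  have ind: "\<And>S. S \<in> sets B \<Longrightarrow> prob (E \<inter> S) = prob E * prob S"
    using E(4) by (auto simp: indep_sets2_eq)
  define g :: "'a \<Rightarrow> real" where "g = (\<lambda>x. indicator E x - a)"
  have gM [measurable]: "g \<in> borel_measurable M" unfolding g_def using EM by simp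
  have gA: "g \<in> borel_measurable A" unfolding g_def using E(1) by simp
  have gint: "integrable M g" unfolding g_def using EM by (simp add: less_top[symmetric])
  have gbd: "AE x in M. \<bar>g x\<bar> \<le> 1" using E(2,3) by (auto simp: g_def a_def indicator_def)
  have gnz: "\<not> (AE x in M. g x = 0)"
  proof
    assume "AE x in M. g x = 0"
    then have "AE x in M. False"
      by (rule eventually_mono) (use E(2,3) in \<open>auto simp: g_def a_def indicator_def of_bool_def split: if_splits\<close>)
    then show False by (simp add: AE_False)
  qed
  show ?thesis unfolding cexp_diff_norm_def
  proof (rule key_lower_bound[OF assms(1,2) gM gbd gnz])
    fix c :: real
    have cgint: "integrable M (\<lambda>x. c * g x)" using gint by simp
    have 1: "AE x in M. real_cond_exp M A (\<lambda>x. c * g x) x = c * g x"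
      by (rule A.real_cond_exp_F_meas[OF cgint]) (use gA in simp)
    have 2: "AE x in M. real_cond_exp M B (\<lambda>x. c * g x) x = 0"
    proof (rule B.real_cond_exp_charact)
      fix S assume S: "S \<in> sets B"
      then have SM: "S \<in> sets M" using B.subalg by (auto simp: subalgebra_def)
      have "(\<integral>x\<in>S. c * g x \<partial>M) = (\<integral>x. c * indicator (E \<inter> S) x - (c * a) * indicator S x \<partial>M)"
        unfolding set_lebesgue_integral_def g_def
        by (rule Bochner_Integration.integral_cong) (auto simp: indicator_def algebra_simps)
      also have "\<dots> = c * prob (E \<inter> S) - c * a * prob S"
        using EM SM by (simp add: less_top[symmetric])
      also have "\<dots> = 0" using ind[OF S] by (simp add: a_def)
      finally show "(\<integral>x\<in>S. c * g x \<partial>M) = (\<integral>x\<in>S. 0 \<partial>M)" by simp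
    qed (use cgint in auto)
    show "AE x in M. real_cond_exp M A (\<lambda>x. c * g x) x - real_cond_exp M B (\<lambda>x. c * g x) x = c * g x"
      using 1 2 by eventually_elim simp
    show "(\<lambda>x. real_cond_exp M A (\<lambda>x. c * g x) x - real_cond_exp M B (\<lambda>x. c * g x) x) \<in> borel_measurable M"
      by simp
  qed
qed

lemma not_tendsto_of_frequent:
  fixes u :: "nat \<Rightarrow> ennreal"
  assumes "\<And>N. \<exists>n\<ge>N. u n \<ge> 1"
  shows "\<not> (u \<longlonglongrightarrow> 0)"
proof
  assume "u \<longlonglongrightarrow> 0"
  then have "eventually (\<lambda>n. u n < 1) sequentially" by (rule order_tendstoD(2)) simp
  then obtain N where "\<And>n. n \<ge> N \<Longrightarrow> u n < 1" by (auto simp: eventually_sequentially)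
  with assms[of N] show False by (auto simp: not_less[symmetric])
qed

theorem mainTheorem13:
  fixes M :: "'a measure" and p :: ennreal
  assumes "prob_space M" and "1 \<le> p"
  shows
   "(\<forall>A B. sigma_subfield M A \<and> sigma_subfield M B \<and> sets A \<subset> sets B
        \<longrightarrow> cexp_diff_norm M p B A \<ge> 1)
  \<and> (\<forall>A B. sigma_subfield M A \<and> sigma_subfield M B \<and> nontriv_indep_event M A B
        \<longrightarrow> cexp_diff_norm M p A B \<ge> 1)
  \<and> (\<forall>Bs :: nat \<Rightarrow> 'a measure. (\<forall>n. sigma_subfield M (Bs n)) \<and>
        (infinite {n. sets (Bs n) \<subset> sets (Bs 0) \<or> sets (Bs 0) \<subset> sets (Bs n)} \<or>
         infinite {n. nontriv_indep_event M (Bs n) (Bs 0) \<or> nontriv_indep_event M (Bs 0) (Bs n)})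
        \<longrightarrow> \<not> ((\<lambda>n. cexp_diff_norm M p (Bs n) (Bs 0)) \<longlonglongrightarrow> 0))
  \<and> (\<forall>Bs :: nat \<Rightarrow> 'a measure. (\<forall>n. sigma_subfield M (Bs n)) \<and>
        (\<forall>n. sets (Bs n) \<subseteq> sets (Bs (Suc n))) \<and>
        \<not> (\<exists>N. \<forall>n\<ge>N. sets (Bs n) = sets (Bs N))
        \<longrightarrow> \<not> ((\<lambda>n. cexp_diff_norm M p (Bs n) (sigma (space M) (\<Union>n. sets (Bs n)))) \<longlonglongrightarrow> 0))
  \<and> (\<forall>Bs :: nat \<Rightarrow> 'a measure. (\<forall>n. sigma_subfield M (Bs n)) \<and>
        (\<forall>n. sets (Bs (Suc n)) \<subseteq> sets (Bs n)) \<and>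
        \<not> (\<exists>N. \<forall>n\<ge>N. sets (Bs n) = sets (Bs N))
        \<longrightarrow> \<not> ((\<lambda>n. cexp_diff_norm M p (Bs n) (sigma (space M) (\<Inter>n. sets (Bs n)))) \<longlonglongrightarrow> 0))"
proof (intro conjI allI impI)
  note P1 = part1[OF assms]
  note P2 = part2[OF assms]
  have subM: "\<And>F. sigma_subfield M F \<Longrightarrow> sets F \<subseteq> sets M \<and> space F = space M"
    by (auto simp: sigma_subfield_def subalgebra_def)
  show "cexp_diff_norm M p B A \<ge> 1" if "sigma_subfield M A \<and> sigma_subfield M B \<and> sets A \<subset> sets B" for A B
    using P1 that by blast
  show "cexp_diff_norm M p A B \<ge> 1" if "sigma_subfield M A \<and> sigma_subfield M B \<and> nontriv_indep_event M A B" for A B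
    using P2 that by blast
  show "\<not> ((\<lambda>n. cexp_diff_norm M p (Bs n) (Bs 0)) \<longlonglongrightarrow> 0)"
    if H: "(\<forall>n. sigma_subfield M (Bs n)) \<and>
        (infinite {n. sets (Bs n) \<subset> sets (Bs 0) \<or> sets (Bs 0) \<subset> sets (Bs n)} \<or>
         infinite {n. nontriv_indep_event M (Bs n) (Bs 0) \<or> nontriv_indep_event M (Bs 0) (Bs n)})" for Bs
  proof (rule not_tendsto_of_frequent)
    fix N
    have sf: "\<And>n. sigma_subfield M (Bs n)" using H by blast
    have good: "cexp_diff_norm M p (Bs n) (Bs 0) \<ge> 1"
      if "n \<in> {n. sets (Bs n) \<subset> sets (Bs 0) \<or> sets (Bs 0) \<subset> sets (Bs n)} \<union>
             {n. nontriv_indep_event M (Bs n) (Bs 0) \<or> nontriv_indep_event M (Bs 0) (Bs n)}" for n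
    proof -
      have s: "cexp_diff_norm M p (Bs n) (Bs 0) = cexp_diff_norm M p (Bs 0) (Bs n)"
        by (rule cexp_diff_norm_sym)
      from that consider "sets (Bs n) \<subset> sets (Bs 0)" | "sets (Bs 0) \<subset> sets (Bs n)"
        | "nontriv_indep_event M (Bs n) (Bs 0)" | "nontriv_indep_event M (Bs 0) (Bs n)" by blast
      then show ?thesis
      proof cases
        case 1 then show ?thesis using P1[OF sf sf, of n 0] s by simp
      next
        case 2 then show ?thesis using P1[OF sf sf, of 0 n] by simp
      next
        case 3 then show ?thesis using P2[OF sf sf, of n 0] by simp
      next
        case 4 then show ?thesis using P2[OF sf sf, of 0 n] s by simp
      qed
    qed
    have "infinite ({n. sets (Bs n) \<subset> sets (Bs 0) \<or> sets (Bs 0) \<subset> sets (Bs n)} \<union>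
             {n. nontriv_indep_event M (Bs n) (Bs 0) \<or> nontriv_indep_event M (Bs 0) (Bs n)})"
      using H by auto
    then obtain n where "n \<ge> N" "n \<in> {n. sets (Bs n) \<subset> sets (Bs 0) \<or> sets (Bs 0) \<subset> sets (Bs n)} \<union>
             {n. nontriv_indep_event M (Bs n) (Bs 0) \<or> nontriv_indep_event M (Bs 0) (Bs n)}"
      unfolding infinite_nat_iff_unbounded_le by blast
    then show "\<exists>n\<ge>N. cexp_diff_norm M p (Bs n) (Bs 0) \<ge> 1" using good by blast
  qed
  show "\<not> ((\<lambda>n. cexp_diff_norm M p (Bs n) (sigma (space M) (\<Union>n. sets (Bs n)))) \<longlonglongrightarrow> 0)"
    if H: "(\<forall>n. sigma_subfield M (Bs n)) \<and> (\<forall>n. sets (Bs n) \<subseteq> sets (Bs (Suc n))) \<and>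
        \<not> (\<exists>N. \<forall>n\<ge>N. sets (Bs n) = sets (Bs N))" for Bs
  proof (rule not_tendsto_of_frequent)
    fix N
    define S where "S = (\<Union>n. sets (Bs n))"
    define Binf where "Binf = sigma (space M) S"
    have sf: "\<And>n. sigma_subfield M (Bs n)" using H by blast
    have SM: "S \<subseteq> sets M" unfolding S_def using subM[OF sf] by blast
    have SP: "S \<subseteq> Pow (space M)" using SM sets.sets_into_space by blast
    have setsB: "sets Binf = sigma_sets (space M) S" unfolding Binf_def using SP by simp
    have spB: "space Binf = space M" unfolding Binf_def using SP by simp
    have null: "null_sets M \<subseteq> S" unfolding S_def using sigma_subfield_null[OF sf[of 0]] by blast
    have sfB: "sigma_subfield M Binf"
      unfolding sigma_subfield_def subalgebra_def
    proof (intro conjI)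
      show "sets Binf \<subseteq> sets M" unfolding setsB using SM by (simp add: sets.sigma_sets_subset)
      have "sets Binf \<union> null_sets M = sets Binf" using null sigma_sets.Basic[of _ S] setsB by blast
      then show "sets Binf = sigma_sets (space M) (sets Binf \<union> null_sets M)"
        using setsB sigma_sets_sigma_sets_eq[OF SP] by simp
    qed (use spB in auto)
    have mono: "sets (Bs n) \<subseteq> sets (Bs m)" if "n \<le> m" for n m
      using lift_Suc_mono_le[of "\<lambda>n. sets (Bs n)", OF _ that] H by blast
    obtain m where m: "m \<ge> N" "sets (Bs m) \<noteq> sets (Bs N)" using H by blast
    have "sets (Bs N) \<subset> sets Binf"
    proof -
      have "sets (Bs m) \<subseteq> sets Binf" unfolding setsB S_def by (blast intro: sigma_sets.Basic)
      then show ?thesis using mono[OF m(1)] m(2) by blast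
    qed
    then have "cexp_diff_norm M p Binf (Bs N) \<ge> 1" using P1[OF sf sfB] by blast
    then show "\<exists>n\<ge>N. cexp_diff_norm M p (Bs n) (sigma (space M) (\<Union>n. sets (Bs n))) \<ge> 1"
      using cexp_diff_norm_sym[of M p Binf "Bs N"] unfolding Binf_def S_def by auto
  qed
  show "\<not> ((\<lambda>n. cexp_diff_norm M p (Bs n) (sigma (space M) (\<Inter>n. sets (Bs n)))) \<longlonglongrightarrow> 0)"
    if H: "(\<forall>n. sigma_subfield M (Bs n)) \<and> (\<forall>n. sets (Bs (Suc n)) \<subseteq> sets (Bs n)) \<and>
        \<not> (\<exists>N. \<forall>n\<ge>N. sets (Bs n) = sets (Bs N))" for Bs
  proof (rule not_tendsto_of_frequent)
    fix N
    define S where "S = (\<Inter>n. sets (Bs n))"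
    define Binf where "Binf = sigma (space M) S"
    have sf: "\<And>n. sigma_subfield M (Bs n)" using H by blast
    have SM: "S \<subseteq> sets M" unfolding S_def using subM[OF sf[of 0]] by blast
    have SP: "S \<subseteq> Pow (space M)" using SM sets.sets_into_space by blast
    have setsB: "sets Binf = sigma_sets (space M) S" unfolding Binf_def using SP by simp
    have spB: "space Binf = space M" unfolding Binf_def using SP by simp
    have sub: "sets Binf \<subseteq> sets (Bs n)" for n
    proof -
      have "sigma_sets (space (Bs n)) S \<subseteq> sets (Bs n)"
        by (rule sets.sigma_sets_subset) (auto simp: S_def)
      then show ?thesis using setsB subM[OF sf[of n]] by simp
    qed
    have SB: "sets Binf = S"
      using sub setsB by (auto simp: S_def intro: sigma_sets.Basic)
    have null: "null_sets M \<subseteq> S" unfolding S_def using sigma_subfield_null[OF sf] by blast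
    have sfB: "sigma_subfield M Binf"
      unfolding sigma_subfield_def subalgebra_def
    proof (intro conjI)
      show "sets Binf \<subseteq> sets M" using SB SM by simp
      have "sets Binf \<union> null_sets M = sets Binf" using null SB by blast
      then show "sets Binf = sigma_sets (space M) (sets Binf \<union> null_sets M)"
        using setsB SB by simp
    qed (use spB in auto)
    have mono: "sets (Bs m) \<subseteq> sets (Bs n)" if "n \<le> m" for n m
      using lift_Suc_antimono_le[of "\<lambda>n. sets (Bs n)", OF _ that] H by blast
    obtain m where m: "m \<ge> N" "sets (Bs m) \<noteq> sets (Bs N)" using H by blast
    have "sets Binf \<subset> sets (Bs N)" using sub[of m] mono[OF m(1)] m(2) by blast
    then have "cexp_diff_norm M p (Bs N) Binf \<ge> 1" using P1[OF sfB sf] by blast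
    then show "\<exists>n\<ge>N. cexp_diff_norm M p (Bs n) (sigma (space M) (\<Inter>n. sets (Bs n))) \<ge> 1"
      unfolding Binf_def S_def by auto
  qed
qed

end
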